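(* For every component $H$ of $G[\overline{C}]$, we have $|N_H(x_1)|=|N_H(x_2)|=1$.
   Context: All graphs are simple. $\mathcal{G}^*$ denotes the class of graphs in which any two distinct odd cycles share at most one edge. Standing setting: $G\in\mathcal{G}^*$ is $2$-connected, and $C$ is a longest odd cycle of $G$ with $|C|\ge 5$. We also write $C$ for its vertex set. Let $\overline{C}=V(G)\setminus C$, assumed nonempty. For $v\in\overline{C}$ and $w\in C$, $v$ touches $w$ if there is a $v,w$-path meeting $C$ only at $w$. $T(v)=\{w\in C: v \text{ touches } w\}$. In this setting, $T(v)$ is the same set for all $v\in\overline{C}$; this set is $\{x_1,x_2\}$ for two adjacent vertices $x_1,x_2$ of $C$. For $u\in V(G)$, write $N_H(u)=N(u)\cap V(H)$. *)

theory Defs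
  imports Main
begin

definition simple_graph :: "'a set \<Rightarrow> ('a \<Rightarrow> 'a \<Rightarrow> bool) \<Rightarrow> bool" where
  "simple_graph V E \<longleftrightarrow> finite V \<and> (\<forall>u v. E u v \<longrightarrow> E v u) \<and> (\<forall>u. \<not> E u u)
     \<and> (\<forall>u v. E u v \<longrightarrow> u \<in> V \<and> v \<in> V)"

definition is_cycle :: "'a set \<Rightarrow> ('a \<Rightarrow> 'a \<Rightarrow> bool) \<Rightarrow> 'a list \<Rightarrow> bool" where
  "is_cycle V E cs \<longleftrightarrow> length cs \<ge> 3 \<and> distinct cs \<and> set cs \<subseteq> V \<and>
     (\<forall>i < length cs. E (cs ! i) (cs ! ((i + 1) mod length cs)))"

definition cycle_edges :: "'a list \<Rightarrow> 'a set set" where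
  "cycle_edges cs = {{cs ! i, cs ! ((i + 1) mod length cs)} | i. i < length cs}"

definition is_odd_cycle :: "'a set \<Rightarrow> ('a \<Rightarrow> 'a \<Rightarrow> bool) \<Rightarrow> 'a list \<Rightarrow> bool" where
  "is_odd_cycle V E cs \<longleftrightarrow> is_cycle V E cs \<and> odd (length cs)"

text \<open>The class G*: any two distinct odd cycles (as subgraphs, i.e. with different
  edge sets) share at most one edge.\<close>
definition in_Gstar :: "'a set \<Rightarrow> ('a \<Rightarrow> 'a \<Rightarrow> bool) \<Rightarrow> bool" where
  "in_Gstar V E \<longleftrightarrow> (\<forall>c1 c2. is_odd_cycle V E c1 \<and> is_odd_cycle V E c2 \<and>
      cycle_edges c1 \<noteq> cycle_edges c2 \<longrightarrow> card (cycle_edges c1 \<inter> cycle_edges c2) \<le> 1)"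

definition longest_odd_cycle :: "'a set \<Rightarrow> ('a \<Rightarrow> 'a \<Rightarrow> bool) \<Rightarrow> 'a list \<Rightarrow> bool" where
  "longest_odd_cycle V E cs \<longleftrightarrow> is_odd_cycle V E cs \<and>
     (\<forall>c. is_odd_cycle V E c \<longrightarrow> length c \<le> length cs)"

definition is_path :: "'a set \<Rightarrow> ('a \<Rightarrow> 'a \<Rightarrow> bool) \<Rightarrow> 'a list \<Rightarrow> bool" where
  "is_path V E xs \<longleftrightarrow> xs \<noteq> [] \<and> distinct xs \<and> set xs \<subseteq> V \<and>
     (\<forall>i. i + 1 < length xs \<longrightarrow> E (xs ! i) (xs ! (i + 1)))"

definition connected_on :: "('a \<Rightarrow> 'a \<Rightarrow> bool) \<Rightarrow> 'a set \<Rightarrow> bool" where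
  "connected_on E S \<longleftrightarrow> S \<noteq> {} \<and>
     (\<forall>u\<in>S. \<forall>v\<in>S. \<exists>xs. is_path S E xs \<and> hd xs = u \<and> last xs = v)"

definition two_connected :: "'a set \<Rightarrow> ('a \<Rightarrow> 'a \<Rightarrow> bool) \<Rightarrow> bool" where
  "two_connected V E \<longleftrightarrow> card V \<ge> 3 \<and> connected_on E V \<and>
     (\<forall>x\<in>V. connected_on E (V - {x}))"

definition is_component :: "('a \<Rightarrow> 'a \<Rightarrow> bool) \<Rightarrow> 'a set \<Rightarrow> 'a set \<Rightarrow> bool" where
  "is_component E S H \<longleftrightarrow> H \<subseteq> S \<and> connected_on E H \<and>
     (\<forall>H'. H \<subseteq> H' \<and> H' \<subseteq> S \<and> connected_on E H' \<longrightarrow> H' = H)"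

definition touches :: "'a set \<Rightarrow> ('a \<Rightarrow> 'a \<Rightarrow> bool) \<Rightarrow> 'a set \<Rightarrow> 'a \<Rightarrow> 'a \<Rightarrow> bool" where
  "touches V E C v w \<longleftrightarrow> w \<in> C \<and>
     (\<exists>xs. is_path V E xs \<and> hd xs = v \<and> last xs = w \<and> set xs \<inter> C = {w})"

definition touch_set :: "'a set \<Rightarrow> ('a \<Rightarrow> 'a \<Rightarrow> bool) \<Rightarrow> 'a set \<Rightarrow> 'a \<Rightarrow> 'a set" where
  "touch_set V E C v = {w \<in> C. touches V E C v w}"

definition nbhd_in :: "('a \<Rightarrow> 'a \<Rightarrow> bool) \<Rightarrow> 'a set \<Rightarrow> 'a \<Rightarrow> 'a set" where
  "nbhd_in E H u = {y \<in> H. E u y}"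

end

theory Submission imports Defs begin


fun wk :: "('a \<Rightarrow> 'a \<Rightarrow> bool) \<Rightarrow> 'a list \<Rightarrow> bool" where
  "wk E [] = True" | "wk E [x] = True" | "wk E (x#y#zs) = (E x y \<and> wk E (y#zs))"

lemma wk_nth: "wk E xs = (\<forall>i. i+1 < length xs \<longrightarrow> E (xs!i) (xs!(i+1)))"
proof (induction E xs rule: wk.induct)
  case (3 E x y zs)
  show ?case
  proof
    assume "wk E (x#y#zs)"
    then show "\<forall>i. i+1 < length (x#y#zs) \<longrightarrow> E ((x#y#zs)!i) ((x#y#zs)!(i+1))"
      using 3 by (auto simp: nth_Cons split: nat.splits)
  next
    assume h: "\<forall>i. i+1 < length (x#y#zs) \<longrightarrow> E ((x#y#zs)!i) ((x#y#zs)!(i+1))"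
    have "E x y" using h[rule_format, of 0] by simp
    moreover have "\<forall>i. i+1 < length (y#zs) \<longrightarrow> E ((y#zs)!i) ((y#zs)!(i+1))"
    proof (intro allI impI)
      fix i assume "i+1 < length (y#zs)"
      then show "E ((y#zs)!i) ((y#zs)!(i+1))" using h[rule_format, of "Suc i"] by simp
    qed
    ultimately show "wk E (x#y#zs)" using 3 by simp
  qed
qed auto

lemma is_path_wk: "is_path V E xs = (xs \<noteq> [] \<and> distinct xs \<and> set xs \<subseteq> V \<and> wk E xs)"
  by (simp add: is_path_def wk_nth)

lemma wk_append: "wk E (xs @ ys) = (wk E xs \<and> wk E ys \<and> (xs \<noteq> [] \<and> ys \<noteq> [] \<longrightarrow> E (last xs) (hd ys)))"
proof (induction E xs rule: wk.induct)
  case (2 E x) then show ?case by (cases ys) auto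
qed auto

lemma wk_rev: "\<forall>u v. E u v \<longrightarrow> E v u \<Longrightarrow> wk E (rev xs) = wk E xs"
  by (induction E xs rule: wk.induct) (auto simp: wk_append)

fun pe :: "'a list \<Rightarrow> 'a set set" where
  "pe [] = {}" | "pe [x] = {}" | "pe (x#y#zs) = insert {x,y} (pe (y#zs))"

lemma pe_nth: "pe xs = {{xs!i, xs!(i+1)} | i. i+1 < length xs}"
proof (induction xs rule: pe.induct)
  case (3 x y zs)
  show ?case
  proof
    show "pe (x # y # zs) \<subseteq> {{(x#y#zs)!i, (x#y#zs)!(i+1)} | i. i+1 < length (x#y#zs)}"
    proof
      fix e assume "e \<in> pe (x#y#zs)"
      then have "e = {x,y} \<or> e \<in> pe (y#zs)" by simp
      then show "e \<in> {{(x#y#zs)!i, (x#y#zs)!(i+1)} | i. i+1 < length (x#y#zs)}"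
      proof
        assume "e = {x,y}" then show ?thesis by (intro CollectI exI[of _ 0]) auto
      next
        assume "e \<in> pe (y#zs)"
        then obtain i where "e = {(y#zs)!i, (y#zs)!(i+1)}" "i+1 < length (y#zs)" using 3 by auto
        then show ?thesis by (intro CollectI exI[of _ "Suc i"]) auto
      qed
    qed
  next
    show "{{(x#y#zs)!i, (x#y#zs)!(i+1)} | i. i+1 < length (x#y#zs)} \<subseteq> pe (x # y # zs)"
    proof
      fix e assume "e \<in> {{(x#y#zs)!i, (x#y#zs)!(i+1)} | i. i+1 < length (x#y#zs)}"
      then obtain i where i: "e = {(x#y#zs)!i, (x#y#zs)!(i+1)}" "i+1 < length (x#y#zs)" by auto
      show "e \<in> pe (x#y#zs)"
      proof (cases i)
        case 0 then show ?thesis using i by simp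
      next
        case (Suc j)
        then have "e \<in> {{(y#zs)!i, (y#zs)!(i+1)} | i. i+1 < length (y#zs)}" using i by auto
        then show ?thesis using 3 by simp
      qed
    qed
  qed
qed auto

lemma pe_append: "pe (xs @ ys) = pe xs \<union> pe ys \<union> (if xs \<noteq> [] \<and> ys \<noteq> [] then {{last xs, hd ys}} else {})"
proof (induction xs rule: pe.induct)
  case (2 x) then show ?case by (cases ys) auto
qed auto

lemma pe_sub: "e \<in> pe xs \<Longrightarrow> e \<subseteq> set xs"
  by (induction xs rule: pe.induct) auto

lemma cycle_iff: "is_cycle V E cs = (length cs \<ge> 3 \<and> is_path V E cs \<and> E (last cs) (hd cs))"
proof
  assume c: "is_cycle V E cs"
  then have n: "length cs \<ge> 3" and cc: "\<forall>i < length cs. E (cs ! i) (cs ! ((i + 1) mod length cs))"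
    by (auto simp: is_cycle_def)
  have "\<forall>i. i+1 < length cs \<longrightarrow> E (cs!i) (cs!(i+1))"
  proof (intro allI impI)
    fix i assume "i+1 < length cs" then show "E (cs!i) (cs!(i+1))" using cc[rule_format, of i] by simp
  qed
  moreover have "E (cs ! (length cs - 1)) (cs ! 0)"
  proof -
    have e: "length cs - 1 + 1 = length cs" using n by simp
    show ?thesis using cc[rule_format, of "length cs - 1"] n unfolding e by simp
  qed
  moreover have "cs \<noteq> []" using n by auto
  ultimately show "length cs \<ge> 3 \<and> is_path V E cs \<and> E (last cs) (hd cs)" using c n
    by (auto simp: is_cycle_def is_path_def last_conv_nth hd_conv_nth)
next
  assume h: "length cs \<ge> 3 \<and> is_path V E cs \<and> E (last cs) (hd cs)"
  then have n: "length cs \<ge> 3" and p: "\<forall>i. i+1 < length cs \<longrightarrow> E (cs!i) (cs!(i+1))"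
     and l: "E (cs ! (length cs - 1)) (cs ! 0)"
    by (auto simp: is_path_def last_conv_nth hd_conv_nth)
  have "\<forall>i < length cs. E (cs ! i) (cs ! ((i + 1) mod length cs))"
  proof (intro allI impI)
    fix i assume i: "i < length cs"
    show "E (cs ! i) (cs ! ((i + 1) mod length cs))"
    proof (cases "i+1 < length cs")
      case True then show ?thesis using p by simp
    next
      case False then have "i = length cs - 1" using i by simp
      moreover have "Suc (length cs - Suc 0) = length cs" using n by simp
      ultimately show ?thesis using l n by simp
    qed
  qed
  then show "is_cycle V E cs" using h by (auto simp: is_cycle_def is_path_def)
qed

lemma cedges: "cs \<noteq> [] \<Longrightarrow> cycle_edges cs = pe cs \<union> {{last cs, hd cs}}"
proof -
  assume ne: "cs \<noteq> []"
  show ?thesis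
  proof
    show "cycle_edges cs \<subseteq> pe cs \<union> {{last cs, hd cs}}"
    proof
      fix e assume "e \<in> cycle_edges cs"
      then obtain i where i: "i < length cs" "e = {cs ! i, cs ! ((i + 1) mod length cs)}"
        by (auto simp: cycle_edges_def)
      show "e \<in> pe cs \<union> {{last cs, hd cs}}"
      proof (cases "i+1 < length cs")
        case True then show ?thesis using i by (auto simp: pe_nth)
      next
        case False then have "i = length cs - 1" using i by simp
        then show ?thesis using i ne by (auto simp: last_conv_nth hd_conv_nth)
      qed
    qed
  next
    show "pe cs \<union> {{last cs, hd cs}} \<subseteq> cycle_edges cs"
    proof
      fix e assume "e \<in> pe cs \<union> {{last cs, hd cs}}"
      then show "e \<in> cycle_edges cs"
      proof
        assume "e \<in> pe cs"
        then obtain i where "e = {cs!i, cs!(i+1)}" "i+1 < length cs" by (auto simp: pe_nth)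
        then show ?thesis unfolding cycle_edges_def by (intro CollectI exI[of _ i]) auto
      next
        assume "e \<in> {{last cs, hd cs}}"
        then have "e = {cs ! (length cs - 1), cs ! ((length cs - 1 + 1) mod length cs)}"
          using ne by (auto simp: last_conv_nth hd_conv_nth)
        then show ?thesis using ne unfolding cycle_edges_def by (intro CollectI exI[of _ "length cs - 1"]) auto
      qed
    qed
  qed
qed

lemma finite_cedges: "finite (cycle_edges cs)"
proof -
  have "cycle_edges cs = (\<lambda>i. {cs!i, cs!((i+1) mod length cs)}) ` {..<length cs}"
    unfolding cycle_edges_def by auto
  then show ?thesis by simp
qed

lemma rot: assumes c: "is_cycle V E (xs @ ys)" shows "is_cycle V E (ys @ xs) \<and> cycle_edges (ys @ xs) = cycle_edges (xs @ ys)"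
proof (cases "xs = [] \<or> ys = []")
  case True then show ?thesis using c by auto
next
  case False
  show ?thesis using False c
    by (auto simp: cycle_iff is_path_wk wk_append cedges pe_append)
qed



definition rel :: "('a \<Rightarrow> 'a \<Rightarrow> bool) \<Rightarrow> 'a set \<Rightarrow> 'a \<Rightarrow> 'a \<Rightarrow> bool" where
  "rel E S u v \<longleftrightarrow> E u v \<and> u \<in> S \<and> v \<in> S"

lemma path_reach: "wk E xs \<Longrightarrow> set xs \<subseteq> S \<Longrightarrow> xs \<noteq> [] \<Longrightarrow> (rel E S)\<^sup>*\<^sup>* (hd xs) (last xs)"
proof (induction E xs rule: wk.induct)
  case (3 E x y zs)
  then have "rel E S x y" by (auto simp: rel_def)
  moreover have "(rel E S)\<^sup>*\<^sup>* y (last (y#zs))" using 3 by auto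
  ultimately show ?case by (auto intro: converse_rtranclp_into_rtranclp)
qed auto

lemma path_reach': "is_path S E xs \<Longrightarrow> (rel E S)\<^sup>*\<^sup>* (hd xs) (last xs)"
  by (auto simp: is_path_wk intro: path_reach)

lemma reach_path: "(rel E S)\<^sup>*\<^sup>* u v \<Longrightarrow> u \<in> S \<Longrightarrow> \<exists>xs. is_path S E xs \<and> hd xs = u \<and> last xs = v"
proof (induction rule: rtranclp_induct)
  case base
  then show ?case by (intro exI[of _ "[u]"]) (auto simp: is_path_wk)
next
  case (step y z)
  then obtain xs where xs: "is_path S E xs" "hd xs = u" "last xs = y" by auto
  have r: "E y z" "y \<in> S" "z \<in> S" using step by (auto simp: rel_def)
  show ?case
  proof (cases "z \<in> set xs")
    case True
    then obtain p q where pq: "xs = p @ z # q" by (metis split_list)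
    have "is_path S E (p @ [z])" using xs(1) unfolding pq
      by (auto simp: is_path_wk wk_append)
    moreover have "hd (p @ [z]) = u" using xs(2) unfolding pq by (cases p) auto
    ultimately show ?thesis by (intro exI[of _ "p @ [z]"]) auto
  next
    case False
    have "is_path S E (xs @ [z])" using xs r False
      by (auto simp: is_path_wk wk_append)
    moreover have "hd (xs @ [z]) = u" using xs by (auto simp: is_path_def)
    ultimately show ?thesis by (intro exI[of _ "xs @ [z]"]) auto
  qed
qed

lemma reach_sym: assumes sym: "\<forall>u v. E u v \<longrightarrow> E v u"
  shows "(rel E S)\<^sup>*\<^sup>* u v \<Longrightarrow> (rel E S)\<^sup>*\<^sup>* v u"
proof (induction rule: rtranclp_induct)
  case (step y z)
  then have "rel E S z y" using sym by (auto simp: rel_def)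
  then show ?case using step by (auto intro: converse_rtranclp_into_rtranclp)
qed auto

lemma conn_reach: "connected_on E H \<Longrightarrow> u \<in> H \<Longrightarrow> v \<in> H \<Longrightarrow> (rel E H)\<^sup>*\<^sup>* u v"
  unfolding connected_on_def using path_reach' by metis

lemma comp_closed:
  assumes sym: "\<forall>u v. E u v \<longrightarrow> E v u" and comp: "is_component E S H"
    and hH: "h \<in> H" and yH: "y \<in> H" and zS: "z \<in> S" and yz: "E y z"
  shows "z \<in> H"
proof -
  define K where "K = {v. (rel E S)\<^sup>*\<^sup>* h v}"
  have HS: "H \<subseteq> S" and cH: "connected_on E H" using comp by (auto simp: is_component_def)
  have hS: "h \<in> S" using HS hH by auto
  have KS: "K \<subseteq> S"
  proof
    fix v assume "v \<in> K"
    then have "(rel E S)\<^sup>*\<^sup>* h v" by (simp add: K_def)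
    then show "v \<in> S" using hS by (induction rule: rtranclp_induct) (auto simp: rel_def)
  qed
  have le: "rel E H \<le> rel E S" using HS by (auto simp: rel_def le_fun_def)
  have HK: "H \<subseteq> K"
  proof
    fix v assume "v \<in> H"
    then have "(rel E H)\<^sup>*\<^sup>* h v" using conn_reach cH hH by metis
    then have "(rel E S)\<^sup>*\<^sup>* h v" using rtranclp_mono[OF le] by (auto simp: le_fun_def)
    then show "v \<in> K" by (simp add: K_def)
  qed
  have Kr: "(rel E K)\<^sup>*\<^sup>* h v" if "v \<in> K" for v
  proof -
    have "(rel E S)\<^sup>*\<^sup>* h v" using that by (simp add: K_def)
    then show ?thesis
    proof (induction rule: rtranclp_induct)
      case (step y z)
      then have "y \<in> K" "z \<in> K" by (auto simp: K_def)
      then have "rel E K y z" using step by (auto simp: rel_def)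
      then show ?case using step by auto
    qed auto
  qed
  have hK: "h \<in> K" by (simp add: K_def)
  have "connected_on E K"
    unfolding connected_on_def
  proof (intro conjI ballI)
    show "K \<noteq> {}" using hK by auto
  next
    fix u v assume "u \<in> K" "v \<in> K"
    then have "(rel E K)\<^sup>*\<^sup>* u v" using Kr reach_sym[OF sym] by (meson rtranclp_trans)
    then show "\<exists>xs. is_path K E xs \<and> hd xs = u \<and> last xs = v" using reach_path \<open>u \<in> K\<close> by metis
  qed
  then have "K = H" using comp HK KS by (auto simp: is_component_def)
  have "(rel E S)\<^sup>*\<^sup>* h y" using HK yH by (auto simp: K_def)
  moreover have "rel E S y z" using yH HS zS yz by (auto simp: rel_def)
  ultimately have "z \<in> K" by (auto simp: K_def)
  then show ?thesis using \<open>K = H\<close> by simp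
qed



lemma wk_Cons: "wk E (x # xs) = (wk E xs \<and> (xs \<noteq> [] \<longrightarrow> E x (hd xs)))"
  by (cases xs) auto

lemma pe_Cons: "pe (x # xs) = pe xs \<union> (if xs = [] then {} else {{x, hd xs}})"
  by (cases xs) auto

lemma card2_le:
  assumes "finite A" "e1 \<in> A" "e2 \<in> A" "e1 \<noteq> e2" shows "card A \<ge> 2"
proof -
  have "card {e1, e2} \<le> card A" using assms by (intro card_mono) auto
  then show ?thesis using assms by simp
qed

lemma gstar_contra:
  assumes "in_Gstar V E" "is_odd_cycle V E c1" "is_odd_cycle V E c2"
    "e1 \<in> cycle_edges c1" "e1 \<in> cycle_edges c2" "e2 \<in> cycle_edges c1" "e2 \<in> cycle_edges c2"
    "e1 \<noteq> e2" "f \<in> cycle_edges c1" "f \<notin> cycle_edges c2"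
  shows False
proof -
  have "cycle_edges c1 \<noteq> cycle_edges c2" using assms by auto
  then have "card (cycle_edges c1 \<inter> cycle_edges c2) \<le> 1" using assms unfolding in_Gstar_def by blast
  moreover have "card (cycle_edges c1 \<inter> cycle_edges c2) \<ge> 2"
    using assms by (intro card2_le) (auto simp: finite_cedges)
  ultimately show False by simp
qed

locale setting =
  fixes V :: "'a set" and E :: "'a \<Rightarrow> 'a \<Rightarrow> bool" and cs :: "'a list" and x1 x2 :: 'a
  assumes sg: "simple_graph V E"
    and gs: "in_Gstar V E"
    and tc: "two_connected V E"
    and lo: "longest_odd_cycle V E cs"
    and l5: "length cs \<ge> 5"
    and ne: "V - set cs \<noteq> {}"
    and x1C: "x1 \<in> set cs" and x2C: "x2 \<in> set cs" and x12: "x1 \<noteq> x2" and e12: "E x1 x2"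
    and ts: "\<forall>v \<in> V - set cs. touch_set V E (set cs) v = {x1, x2}"
begin

lemma sym: "\<forall>u v. E u v \<longrightarrow> E v u" using sg by (auto simp: simple_graph_def)
lemma inV: "E u v \<Longrightarrow> u \<in> V \<and> v \<in> V" using sg by (auto simp: simple_graph_def)
lemma cyc: "is_cycle V E cs" "odd (length cs)" using lo by (auto simp: longest_odd_cycle_def is_odd_cycle_def)
lemma csV: "set cs \<subseteq> V" using cyc by (auto simp: is_cycle_def)

lemma touch: assumes "y \<in> V - set cs" "z \<in> set cs" "E y z" shows "z = x1 \<or> z = x2"
proof -
  have "touches V E (set cs) y z" unfolding touches_def
    using assms csV by (intro conjI exI[of _ "[y, z]"]) (auto simp: is_path_def)
  then have "z \<in> touch_set V E (set cs) y" using assms by (simp add: touch_set_def)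
  then show ?thesis using ts assms by auto
qed

lemma swap: "setting V E cs x2 x1"
  using sg gs tc lo l5 ne x1C x2C x12 e12 ts sym unfolding setting_def by (auto simp: insert_commute)

lemma lower: assumes comp: "is_component E (V - set cs) H" shows "\<exists>y\<in>H. E x1 y"
proof -
  have HS: "H \<subseteq> V - set cs" and cH: "connected_on E H" using comp by (auto simp: is_component_def)
  obtain h where hH: "h \<in> H" using cH by (auto simp: connected_on_def)
  have "\<exists>w \<in> set cs. w \<noteq> x1 \<and> w \<noteq> x2"
  proof (rule ccontr)
    assume "\<not> ?thesis"
    then have "set cs \<subseteq> {x1, x2}" by auto
    then have "card (set cs) \<le> 2" by (metis card_2_iff card_mono finite.emptyI finite.insertI x12 )
    moreover have "card (set cs) = length cs" using cyc by (simp add: is_cycle_def distinct_card)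
    ultimately show False using l5 by simp
  qed
  then obtain w where w: "w \<in> set cs" "w \<noteq> x1" "w \<noteq> x2" by auto
  have c2: "connected_on E (V - {x2})" using tc x2C csV by (auto simp: two_connected_def)
  have "h \<in> V - {x2}" "w \<in> V - {x2}" using hH HS w csV x2C by auto
  then have r: "(rel E (V - {x2}))\<^sup>*\<^sup>* h w" using conn_reach[OF c2] by blast
  have "\<And>z. (rel E (V - {x2}))\<^sup>*\<^sup>* h z \<Longrightarrow> z \<in> H \<or> (\<exists>y\<in>H. E x1 y)"
  proof -
    fix z assume "(rel E (V - {x2}))\<^sup>*\<^sup>* h z"
    then show "z \<in> H \<or> (\<exists>y\<in>H. E x1 y)"
    proof (induction rule: rtranclp_induct)
      case base then show ?case using hH by simp
    next
      case (step y z)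
      show ?case
      proof (cases "y \<in> H")
        case False then show ?thesis using step by auto
      next
        case True
        have yz: "E y z" "z \<in> V" "z \<noteq> x2" using step by (auto simp: rel_def)
        show ?thesis
        proof (cases "z \<in> set cs")
          case True
          then have "z = x1" using touch[of y z] yz \<open>y \<in> H\<close> HS by auto
          then show ?thesis using yz sym \<open>y \<in> H\<close> by auto
        next
          case False
          then have "z \<in> H" using comp_closed[OF sym comp hH \<open>y \<in> H\<close> _ yz(1)] yz by auto
          then show ?thesis by simp
        qed
      qed
    qed
  qed
  from this[OF r] show ?thesis using w HS by auto
qed

lemma Qpath: "\<exists>Q. is_path V E Q \<and> hd Q = x1 \<and> last Q = x2 \<and> length Q = length cs \<and> set Q = set cs"
proof -
  obtain p q where pq: "cs = p @ x1 # q" using x1C by (metis split_list)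
  have r1: "is_cycle V E (x1 # q @ p)" "cycle_edges (x1 # q @ p) = cycle_edges cs"
    using rot[of V E p "x1 # q"] cyc(1) unfolding pq by auto
  have "x2 \<in> set (q @ p)" using x2C x12 pq by auto
  then obtain A B where AB: "q @ p = A @ x2 # B" by (metis split_list)
  have cA: "is_cycle V E (x1 # A @ x2 # B)" "cycle_edges (x1 # A @ x2 # B) = cycle_edges cs"
    using r1 AB by auto
  have "length (q @ p) = length A + length B + 1" using AB by simp
  then have len: "length cs = length A + length B + 2" using pq by simp
  have "set (q @ p) = set A \<union> insert x2 (set B)" using AB by simp
  then have setc: "set cs = insert x1 (set A \<union> insert x2 (set B))" using pq by auto
  have dist: "distinct (x1 # A @ x2 # B)" using cA(1) by (auto simp: is_cycle_def)
  have cA2: "is_cycle V E (A @ x2 # B @ [x1])" using rot[of V E "[x1]" "A @ x2 # B"] cA(1) by auto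
  have pA: "is_path V E (x1 # A @ x2 # B)" and pA2: "is_path V E (A @ x2 # B @ [x1])"
    using cA(1) cA2 by (auto simp: cycle_iff)
  show ?thesis
  proof (cases "B = []")
    case True
    then show ?thesis using pA len setc by (intro exI[of _ "x1 # A @ x2 # B"]) auto
  next
    case Bne: False
    show ?thesis
    proof (cases "A = []")
      case True
      have w: "wk E (x2 # B @ [x1])" using pA2 True by (simp add: is_path_wk)
      have "wk E (rev (x2 # B @ [x1]))" by (subst wk_rev[OF sym]) (rule w)
      then have "is_path V E (rev (x2 # B @ [x1]))" using pA2 True
        by (auto simp: is_path_wk)
      then show ?thesis using True len setc by (intro exI[of _ "rev (x2 # B @ [x1])"]) auto
    next
      case Ane: False
      have nx: "x1 \<notin> set A" "x1 \<notin> set B" "x2 \<notin> set A" "x2 \<notin> set B" "x1 \<noteq> x2" using dist by auto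
      have hl: "hd A \<in> set A" "last A \<in> set A" "hd B \<in> set B" "last B \<in> set B" using Ane Bne by auto
      have Ec: "cycle_edges (x1 # A @ x2 # B) = pe A \<union> pe B \<union> {{x1, hd A}, {last A, x2}, {x2, hd B}, {last B, x1}}"
        using Ane Bne by (auto simp: cedges pe_append pe_Cons simp del: pe.simps(3))
      have csodd: "is_odd_cycle V E (x1 # A @ x2 # B)" using cA cyc len by (simp add: is_odd_cycle_def)
      have notx: "f \<notin> pe A" "f \<notin> pe B" if "x1 \<in> f" for f using pe_sub that nx by blast+
      show ?thesis
      proof (cases "odd (length A)")
        case True
        have c1: "is_odd_cycle V E (x1 # A @ [x2])"
        proof -
          have "is_path V E (x1 # A @ [x2])" using pA Ane
            by (auto simp: is_path_wk wk_append wk_Cons simp del: wk.simps(3))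
          moreover have "E x2 x1" using sym e12 by blast
          moreover have "length A \<ge> 1" using Ane by (cases A) auto
          ultimately show ?thesis using True
            by (auto simp: is_odd_cycle_def cycle_iff)
        qed
        have E1: "cycle_edges (x1 # A @ [x2]) = pe A \<union> {{x1, hd A}, {last A, x2}, {x2, x1}}"
          using Ane by (auto simp: cedges pe_append pe_Cons simp del: pe.simps(3))
        have "{x2, x1} \<notin> cycle_edges (x1 # A @ x2 # B)"
          unfolding Ec using notx[of "{x2,x1}"] nx hl by (auto simp: doubleton_eq_iff)
        moreover have "{x1, hd A} \<noteq> {last A, x2}" using nx hl by (auto simp: doubleton_eq_iff)
        ultimately show ?thesis
          using gstar_contra[OF gs c1 csodd, of "{x1, hd A}" "{last A, x2}" "{x2, x1}"] E1 Ec by auto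
      next
        case False
        then have Bev: "odd (length B)" using len cyc(2) by simp
        have c1: "is_odd_cycle V E (x2 # B @ [x1])"
        proof -
          have "is_path V E (x2 # B @ [x1])" using pA2 Bne
            by (auto simp: is_path_wk wk_append wk_Cons simp del: wk.simps(3))
          moreover have "length B \<ge> 1" using Bne by (cases B) auto
          ultimately show ?thesis using Bev e12
            by (auto simp: is_odd_cycle_def cycle_iff)
        qed
        have E1: "cycle_edges (x2 # B @ [x1]) = pe B \<union> {{x2, hd B}, {last B, x1}, {x1, x2}}"
          using Bne by (auto simp: cedges pe_append pe_Cons simp del: pe.simps(3))
        have "{x1, x2} \<notin> cycle_edges (x1 # A @ x2 # B)"
          unfolding Ec using notx[of "{x1,x2}"] nx hl by (auto simp: doubleton_eq_iff)
        moreover have "{x2, hd B} \<noteq> {last B, x1}" using nx hl by (auto simp: doubleton_eq_iff)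
        ultimately show ?thesis
          using gstar_contra[OF gs c1 csodd, of "{x2, hd B}" "{last B, x1}" "{x1, x2}"] E1 Ec by auto
      qed
    qed
  qed
qed

end


context setting begin

lemma oddp: assumes p: "is_path V E p" and dj: "set p \<inter> set cs = {}"
  and h: "E x1 (hd p)" and l: "E x2 (last p)" shows "odd (length p)"
proof (rule ccontr)
  assume ev: "\<not> odd (length p)"
  obtain Q where Q: "is_path V E Q" "hd Q = x1" "last Q = x2" "length Q = length cs" "set Q = set cs"
    using Qpath by blast
  have pne: "p \<noteq> []" using p by (auto simp: is_path_def)
  have wr: "wk E (rev p)" using p wk_rev[OF sym] by (simp add: is_path_wk)
  have "is_path V E (Q @ rev p)" using Q p dj wr pne l
    by (auto simp: is_path_wk wk_append hd_rev)
  moreover have "E (last (Q @ rev p)) (hd (Q @ rev p))" using pne Q h sym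
    by (auto simp: last_rev is_path_def)
  moreover have "length (Q @ rev p) \<ge> 3" using Q l5 by simp
  ultimately have "is_odd_cycle V E (Q @ rev p)" using ev cyc(2) Q(4)
    by (auto simp: is_odd_cycle_def cycle_iff)
  then have "length (Q @ rev p) \<le> length cs" using lo by (auto simp: longest_odd_cycle_def)
  then show False using Q(4) pne by simp
qed

lemma upper: assumes comp: "is_component E (V - set cs) H"
  and aH: "a \<in> H" and bH: "b \<in> H" and ea: "E x1 a" and eb: "E x1 b" shows "a = b"
proof (rule ccontr)
  assume ab: "a \<noteq> b"
  have HS: "H \<subseteq> V - set cs" and cH: "connected_on E H" using comp by (auto simp: is_component_def)
  obtain c where cH': "c \<in> H" and ec: "E x2 c" using setting.lower[OF swap comp] by auto
  have cyc_of: "is_odd_cycle V E (x1 # p @ [x2]) \<and>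
      cycle_edges (x1 # p @ [x2]) = pe p \<union> {{x1, hd p}, {c, x2}, {x2, x1}} \<and> x1 \<notin> set p"
    if "is_path H E p" "last p = c" "E x1 (hd p)" for p
  proof -
    have pV: "is_path V E p" and dj: "set p \<inter> set cs = {}" using that(1) HS
      by (auto simp: is_path_def)
    have pne: "p \<noteq> []" using that(1) by (auto simp: is_path_def)
    have od: "odd (length p)" using oddp[OF pV dj that(3)] ec that(2) by simp
    have nx: "x1 \<notin> set p" "x2 \<notin> set p" using dj x1C x2C by auto
    have "is_path V E (x1 # p @ [x2])" using pV pne nx x12 that ec sym x1C x2C csV
      by (auto simp: is_path_wk wk_append wk_Cons simp del: wk.simps(3))
    moreover have "E x2 x1" using sym e12 by blast
    moreover have "length p \<ge> 1" using pne by (cases p) auto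
    ultimately have "is_odd_cycle V E (x1 # p @ [x2])" using od
      by (auto simp: is_odd_cycle_def cycle_iff)
    moreover have "cycle_edges (x1 # p @ [x2]) = pe p \<union> {{x1, hd p}, {c, x2}, {x2, x1}}"
      using pne that(2) by (auto simp: cedges pe_append pe_Cons simp del: pe.simps(3))
    ultimately show ?thesis using nx by simp
  qed
  obtain pa where pa: "is_path H E pa" "hd pa = a" "last pa = c"
    using cH aH cH' by (auto simp: connected_on_def)
  obtain pb where pb: "is_path H E pb" "hd pb = b" "last pb = c"
    using cH bH cH' by (auto simp: connected_on_def)
  have A: "is_odd_cycle V E (x1 # pa @ [x2])" "cycle_edges (x1 # pa @ [x2]) = pe pa \<union> {{x1, a}, {c, x2}, {x2, x1}}"
    using cyc_of[OF pa(1) pa(3)] pa ea by auto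
  have B: "is_odd_cycle V E (x1 # pb @ [x2])" "cycle_edges (x1 # pb @ [x2]) = pe pb \<union> {{x1, b}, {c, x2}, {x2, x1}}"
    "x1 \<notin> set pb"
    using cyc_of[OF pb(1) pb(3)] pb eb by auto
  have cx: "c \<noteq> x1" "a \<noteq> x2" using cH' aH HS x1C x2C by auto
  have "{x1, a} \<notin> pe pb" using pe_sub B(3) by blast
  then have "{x1, a} \<notin> cycle_edges (x1 # pb @ [x2])" using B(2) ab cx x12 by (auto simp: doubleton_eq_iff)
  moreover have "{c, x2} \<noteq> {x2, x1}" using cx by (auto simp: doubleton_eq_iff)
  ultimately show False
    using gstar_contra[OF gs A(1) B(1), of "{c, x2}" "{x2, x1}" "{x1, a}"] A(2) B(2) by auto
qed

lemma card1: assumes comp: "is_component E (V - set cs) H" shows "card (nbhd_in E H x1) = 1"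
proof -
  obtain a where a: "a \<in> H" "E x1 a" using lower[OF comp] by auto
  have "nbhd_in E H x1 = {a}" using a upper[OF comp] by (auto simp: nbhd_in_def)
  then show ?thesis by simp
qed

end

theorem mainTheorem9:
  fixes V :: "'a set" and E :: "'a \<Rightarrow> 'a \<Rightarrow> bool" and cs :: "'a list" and x1 x2 :: 'a
  assumes "simple_graph V E"
    and "in_Gstar V E"
    and "two_connected V E"
    and "longest_odd_cycle V E cs"
    and "length cs \<ge> 5"
    and "V - set cs \<noteq> {}"
    and "x1 \<in> set cs" and "x2 \<in> set cs" and "x1 \<noteq> x2" and "E x1 x2"
    and "\<forall>v \<in> V - set cs. touch_set V E (set cs) v = {x1, x2}"
  shows "\<forall>H. is_component E (V - set cs) H \<longrightarrow>
           card (nbhd_in E H x1) = 1 \<and> card (nbhd_in E H x2) = 1"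
proof -
  interpret S: setting V E cs x1 x2 using assms unfolding setting_def by blast
  show ?thesis using S.card1 setting.card1[OF S.swap] by blast
qed

end
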